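(* Let $(E,\langle\cdot,\cdot\rangle,\rho)$ be a Courant vector bundle over $M$ with two pre-Courant algebroid structures $\circ$ and $\tilde\circ$ having Jacobiators $J$ and $\tilde J$. If there is $h\in\Omega^3(M)$ with $e_1\circ e_2-e_1\,\tilde\circ\,e_2=\rho^*\big(h(\rho(e_1),\rho(e_2),\cdot)\big)$ for all $e_1,e_2\in\Gamma(E)$, then $J^\flat-\tilde J^\flat=\rho^*(dh)$, i.e. $J^\flat(e_1,e_2,e_3,e_4)-\tilde J^\flat(e_1,e_2,e_3,e_4)=dh(\rho(e_1),\rho(e_2),\rho(e_3),\rho(e_4))$ for all $e_i\in\Gamma(E)$. In particular the two structures have the same Pontryagin class.
   Context: A Courant vector bundle over a smooth manifold $M$ is a vector bundle $E\to M$ with a fibrewise nondegenerate symmetric bilinear form $\langle\cdot,\cdot\rangle$ and a bundle map $\rho:E\to TM$ such that $\rho\circ\rho^*=0$, where $\rho^*:T^*M\to E^*\cong E$ is the dual of $\rho$ followed by the identification $E^*\cong E$ via $\langle\cdot,\cdot\rangle$. A pre-Courant algebroid structure on it is an $\mathbb R$-bilinear operation $\circ$ on $\Gamma(E)$ such that for all $e_1,e_2,e_3\in\Gamma(E)$: (i) $\rho(e_1\circ e_2)=[\rho(e_1),\rho(e_2)]$; (ii) $\langle e_1\circ e_1,e_2\rangle=\frac12\rho(e_2)\langle e_1,e_1\rangle$; (iii) $\rho(e_1)\langle e_2,e_3\rangle=\langle e_1\circ e_2,e_3\rangle+\langle e_2,e_1\circ e_3\rangle$. The Jacobiator is $J(e_1,e_2,e_3)=e_1\circ(e_2\circ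 e_3)-(e_1\circ e_2)\circ e_3-e_2\circ(e_1\circ e_3)$, and $J^\flat(e_1,e_2,e_3,e_4)=\langle J(e_1,e_2,e_3),e_4\rangle$. Two such 4-forms $H_1,H_2$ on $E$ are equivalent if $H_1-H_2=\rho^*(dh')$ for some $h'\in\Omega^3(M)$ (where $\rho^*$ of a form on $M$ means its pullback along $\rho$); the Pontryagin class of a pre-Courant algebroid is the equivalence class of $J^\flat$. *)

theory Defs
  imports Complex_Main
begin

text \<open>Algebraic (Lie--Rinehart style) model of a Courant vector bundle over a manifold M.
  Type 'f plays the role of C^\<infinity>(M), type 'v the vector fields on M (with
  C^\<infinity>(M)-module structure smv, Lie bracket br, action act X f = X(f)),
  type 'e the sections of E (with C^\<infinity>(M)-module structure sme).
  Differential k-forms are C^\<infinity>(M)-multilinear alternating maps on vector fields,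
  and the exterior derivative is given by the invariant (Koszul) formula.\<close>

definition is_module :: "('f::{comm_ring_1,real_algebra_1} \<Rightarrow> 'a::real_vector \<Rightarrow> 'a) \<Rightarrow> bool" where
  "is_module sm \<longleftrightarrow>
     (\<forall>f g x. sm (f * g) x = sm f (sm g x)) \<and> (\<forall>x. sm 1 x = x) \<and>
     (\<forall>f x y. sm f (x + y) = sm f x + sm f y) \<and>
     (\<forall>f g x. sm (f + g) x = sm f x + sm g x) \<and>
     (\<forall>r x. sm (of_real r) x = r *\<^sub>R x)"

definition real_bilinear :: "('a::real_vector \<Rightarrow> 'b::real_vector \<Rightarrow> 'c::real_vector) \<Rightarrow> bool" where
  "real_bilinear F \<longleftrightarrow> (\<forall>x. linear (F x)) \<and> (\<forall>y. linear (\<lambda>x. F x y))"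

definition vector_fields ::
  "('f::{comm_ring_1,real_algebra_1} \<Rightarrow> 'v::real_vector \<Rightarrow> 'v) \<Rightarrow> ('v \<Rightarrow> 'v \<Rightarrow> 'v) \<Rightarrow> ('v \<Rightarrow> 'f \<Rightarrow> 'f) \<Rightarrow> bool" where
  "vector_fields smv br act \<longleftrightarrow>
     is_module smv \<and> real_bilinear br \<and>
     (\<forall>X. br X X = 0) \<and>
     (\<forall>X Y Z. br X (br Y Z) = br (br X Y) Z + br Y (br X Z)) \<and>
     (\<forall>X. linear (act X)) \<and>
     (\<forall>X Y f. act (X + Y) f = act X f + act Y f) \<and>
     (\<forall>f X g. act (smv f X) g = f * act X g) \<and>
     (\<forall>X f g. act X (f * g) = act X f * g + f * act X g) \<and>
     (\<forall>X Y f. act (br X Y) f = act X (act Y f) - act Y (act X f)) \<and>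
     (\<forall>X Y f. br X (smv f Y) = smv f (br X Y) + smv (act X f) Y)"

definition form1 :: "('f::{comm_ring_1,real_algebra_1} \<Rightarrow> 'v::real_vector \<Rightarrow> 'v) \<Rightarrow> ('v \<Rightarrow> 'f) \<Rightarrow> bool" where
  "form1 smv \<alpha> \<longleftrightarrow> (\<forall>X Y. \<alpha> (X + Y) = \<alpha> X + \<alpha> Y) \<and> (\<forall>f X. \<alpha> (smv f X) = f * \<alpha> X)"

definition form3 :: "('f::{comm_ring_1,real_algebra_1} \<Rightarrow> 'v::real_vector \<Rightarrow> 'v) \<Rightarrow> ('v \<Rightarrow> 'v \<Rightarrow> 'v \<Rightarrow> 'f) \<Rightarrow> bool" where
  "form3 smv h \<longleftrightarrow>
     (\<forall>Y Z. form1 smv (\<lambda>X. h X Y Z)) \<and> (\<forall>X Z. form1 smv (\<lambda>Y. h X Y Z)) \<and>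
     (\<forall>X Y. form1 smv (\<lambda>Z. h X Y Z)) \<and>
     (\<forall>X Y. h X X Y = 0) \<and> (\<forall>X Y. h X Y Y = 0) \<and> (\<forall>X Y. h X Y X = 0)"

definition d3 :: "('v \<Rightarrow> 'v \<Rightarrow> 'v) \<Rightarrow> ('v \<Rightarrow> 'f::{comm_ring_1,real_algebra_1} \<Rightarrow> 'f) \<Rightarrow> ('v \<Rightarrow> 'v \<Rightarrow> 'v \<Rightarrow> 'f)
    \<Rightarrow> 'v \<Rightarrow> 'v \<Rightarrow> 'v \<Rightarrow> 'v \<Rightarrow> 'f" where
  "d3 br act h X0 X1 X2 X3 =
      act X0 (h X1 X2 X3) - act X1 (h X0 X2 X3) + act X2 (h X0 X1 X3) - act X3 (h X0 X1 X2)
    - h (br X0 X1) X2 X3 + h (br X0 X2) X1 X3 - h (br X0 X3) X1 X2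
    - h (br X1 X2) X0 X3 + h (br X1 X3) X0 X2 - h (br X2 X3) X0 X1"

text \<open>rho^* of a 1-form, via the identification E^* = E given by the pairing.\<close>
definition rho_star :: "('e \<Rightarrow> 'e \<Rightarrow> 'f) \<Rightarrow> ('e \<Rightarrow> 'v) \<Rightarrow> ('v \<Rightarrow> 'f) \<Rightarrow> 'e" where
  "rho_star ip rho \<alpha> = (THE s. \<forall>e. ip s e = \<alpha> (rho e))"

definition courant_vb ::
  "('f::{comm_ring_1,real_algebra_1} \<Rightarrow> 'v::real_vector \<Rightarrow> 'v) \<Rightarrow> ('v \<Rightarrow> 'v \<Rightarrow> 'v) \<Rightarrow> ('v \<Rightarrow> 'f \<Rightarrow> 'f)
   \<Rightarrow> ('f \<Rightarrow> 'e::real_vector \<Rightarrow> 'e) \<Rightarrow> ('e \<Rightarrow> 'e \<Rightarrow> 'f) \<Rightarrow> ('e \<Rightarrow> 'v) \<Rightarrow> bool" where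
  "courant_vb smv br act sme ip rho \<longleftrightarrow>
     vector_fields smv br act \<and> is_module sme \<and>
     (\<forall>x y. ip x y = ip y x) \<and>
     (\<forall>x y z. ip (x + y) z = ip x z + ip y z) \<and>
     (\<forall>f x y. ip (sme f x) y = f * ip x y) \<and>
     (\<forall>x. (\<forall>y. ip x y = 0) \<longrightarrow> x = 0) \<and>
     (\<forall>\<alpha>. form1 sme \<alpha> \<longrightarrow> (\<exists>s. \<forall>y. ip s y = \<alpha> y)) \<and>
     (\<forall>x y. rho (x + y) = rho x + rho y) \<and>
     (\<forall>f x. rho (sme f x) = smv f (rho x)) \<and>
     (\<forall>\<alpha>. form1 smv \<alpha> \<longrightarrow> rho (rho_star ip rho \<alpha>) = 0)"

definition pre_courant ::
  "('v::real_vector \<Rightarrow> 'v \<Rightarrow> 'v) \<Rightarrow> ('v \<Rightarrow> 'f::{comm_ring_1,real_algebra_1} \<Rightarrow> 'f)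
   \<Rightarrow> ('e::real_vector \<Rightarrow> 'e \<Rightarrow> 'f) \<Rightarrow> ('e \<Rightarrow> 'v) \<Rightarrow> ('e \<Rightarrow> 'e \<Rightarrow> 'e) \<Rightarrow> bool" where
  "pre_courant br act ip rho circ \<longleftrightarrow>
     real_bilinear circ \<and>
     (\<forall>e1 e2. rho (circ e1 e2) = br (rho e1) (rho e2)) \<and>
     (\<forall>e1 e2. ip (circ e1 e1) e2 = (1/2) *\<^sub>R act (rho e2) (ip e1 e1)) \<and>
     (\<forall>e1 e2 e3. act (rho e1) (ip e2 e3) = ip (circ e1 e2) e3 + ip e2 (circ e1 e3))"

definition jacobiator :: "('e::real_vector \<Rightarrow> 'e \<Rightarrow> 'e) \<Rightarrow> 'e \<Rightarrow> 'e \<Rightarrow> 'e \<Rightarrow> 'e" where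
  "jacobiator circ e1 e2 e3 = circ e1 (circ e2 e3) - circ (circ e1 e2) e3 - circ e2 (circ e1 e3)"

definition jflat :: "('e \<Rightarrow> 'e \<Rightarrow> 'f) \<Rightarrow> ('e::real_vector \<Rightarrow> 'e \<Rightarrow> 'e) \<Rightarrow> 'e \<Rightarrow> 'e \<Rightarrow> 'e \<Rightarrow> 'e \<Rightarrow> 'f" where
  "jflat ip circ e1 e2 e3 e4 = ip (jacobiator circ e1 e2 e3) e4"

definition equiv4 ::
  "('f::{comm_ring_1,real_algebra_1} \<Rightarrow> 'v::real_vector \<Rightarrow> 'v) \<Rightarrow> ('v \<Rightarrow> 'v \<Rightarrow> 'v) \<Rightarrow> ('v \<Rightarrow> 'f \<Rightarrow> 'f)
   \<Rightarrow> ('e \<Rightarrow> 'v) \<Rightarrow> ('e \<Rightarrow> 'e \<Rightarrow> 'e \<Rightarrow> 'e \<Rightarrow> 'f) \<Rightarrow> ('e \<Rightarrow> 'e \<Rightarrow> 'e \<Rightarrow> 'e \<Rightarrow> 'f) \<Rightarrow> bool" where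
  "equiv4 smv br act rho H1 H2 \<longleftrightarrow>
     (\<exists>h'. form3 smv h' \<and>
        (\<forall>e1 e2 e3 e4. H1 e1 e2 e3 e4 - H2 e1 e2 e3 e4 = d3 br act h' (rho e1) (rho e2) (rho e3) (rho e4)))"

end

theory Submission
  imports Defs
begin

theorem proposition4p5:
  fixes smv :: "'f::{comm_ring_1,real_algebra_1} \<Rightarrow> 'v::real_vector \<Rightarrow> 'v"
    and br :: "'v \<Rightarrow> 'v \<Rightarrow> 'v" and act :: "'v \<Rightarrow> 'f \<Rightarrow> 'f"
    and sme :: "'f \<Rightarrow> 'e::real_vector \<Rightarrow> 'e" and ip :: "'e \<Rightarrow> 'e \<Rightarrow> 'f" and rho :: "'e \<Rightarrow> 'v"
    and circ circ' :: "'e \<Rightarrow> 'e \<Rightarrow> 'e" and h :: "'v \<Rightarrow> 'v \<Rightarrow> 'v \<Rightarrow> 'f"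
  assumes "courant_vb smv br act sme ip rho"
    and "pre_courant br act ip rho circ"
    and "pre_courant br act ip rho circ'"
    and "form3 smv h"
    and "\<forall>e1 e2. circ e1 e2 - circ' e1 e2 = rho_star ip rho (\<lambda>X. h (rho e1) (rho e2) X)"
  shows "(\<forall>e1 e2 e3 e4. jflat ip circ e1 e2 e3 e4 - jflat ip circ' e1 e2 e3 e4
            = d3 br act h (rho e1) (rho e2) (rho e3) (rho e4))
       \<and> equiv4 smv br act rho (jflat ip circ) (jflat ip circ')"
proof -
  note cv = assms(1)[unfolded courant_vb_def]
  note pc = assms(2)[unfolded pre_courant_def]
  note pc' = assms(3)[unfolded pre_courant_def]
  note f3 = assms(4)[unfolded form3_def form1_def]
  have ipadd: "ip (x + y) z = ip x z + ip y z" for x y z using cv by blast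
  have ipsym: "ip x y = ip y x" for x y using cv by blast
  have ipdiff: "ip (x - y) z = ip x z - ip y z" for x y z
    using ipadd[of "x - y" y z] by (simp add: algebra_simps)
  have ipadd2: "ip z (x + y) = ip z x + ip z y" for x y z using ipadd ipsym by metis
  have ipnd: "(\<forall>y. ip x y = 0) \<Longrightarrow> x = 0" for x using cv by blast
  have rhoadd: "rho (x + y) = rho x + rho y" for x y using cv by blast
  have rhosm: "rho (sme f x) = smv f (rho x)" for f x using cv by blast
  have hadd3: "h X Y (Z + W) = h X Y Z + h X Y W" for X Y Z W using f3 by simp
  have hsm3: "h X Y (smv f Z) = f * h X Y Z" for X Y Z f using f3 by simp
  have hadd1: "h (X + W) Y Z = h X Y Z + h W Y Z" for X Y Z W using f3 by simp
  have hadd2: "h X (Y + W) Z = h X Y Z + h X W Z" for X Y Z W using f3 by simp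
  have h0a: "h X X Y = 0" "h X Y Y = 0" "h X Y X = 0" for X Y using f3 by simp_all
  have hanti12: "h Y X Z = - h X Y Z" for X Y Z
  proof -
    have "0 = h X Y Z + h Y X Z" using h0a(1)[of "X + Y" Z] h0a(1)[of X Z] h0a(1)[of Y Z] unfolding hadd1 hadd2 by (simp add: add.commute)
    thus ?thesis by (simp add: eq_neg_iff_add_eq_0 add.commute)
  qed
  have hanti23: "h X Z Y = - h X Y Z" for X Y Z
  proof -
    have "0 = h X Y Z + h X Z Y" using h0a(2)[of X "Y + Z"] h0a(2)[of X Y] h0a(2)[of X Z] unfolding hadd3 hadd2 by (simp add: add.commute)
    thus ?thesis by (simp add: eq_neg_iff_add_eq_0 add.commute)
  qed
  have hcyc: "h X Y Z = h Z X Y" for X Y Z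
    using hanti12[of Z X Y] hanti23[of Z Y X] hanti12[of Y Z X] hanti23[of X Z Y] by simp
  have rs: "ip (rho_star ip rho (\<lambda>X. h (rho a) (rho b) X)) c = h (rho a) (rho b) (rho c)" for a b c
  proof -
    have "form1 sme (\<lambda>y. h (rho a) (rho b) (rho y))"
      unfolding form1_def by (simp add: rhoadd rhosm hadd3 hsm3)
    then obtain s where s: "\<forall>y. ip s y = h (rho a) (rho b) (rho y)" using cv by blast
    have "\<forall>e. ip (rho_star ip rho (\<lambda>X. h (rho a) (rho b) X)) e = h (rho a) (rho b) (rho e)"
      unfolding rho_star_def
    proof (rule theI[where a = s])
      show "\<forall>e. ip s e = h (rho a) (rho b) (rho e)" by (rule s)
      fix t assume t: "\<forall>e. ip t e = h (rho a) (rho b) (rho e)"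
      have "\<forall>y. ip (t - s) y = 0" using s t by (simp add: ipdiff)
      hence "t - s = 0" by (rule ipnd)
      thus "t = s" by simp
    qed
    thus ?thesis by blast
  qed
  define D where "D a b = circ a b - circ' a b" for a b
  have F1: "ip (D a b) c = h (rho a) (rho b) (rho c)" for a b c
    unfolding D_def using assms(5) rs by metis
  have cD: "circ a b = circ' a b + D a b" for a b unfolding D_def by simp
  have lin2: "circ' a (x + y) = circ' a x + circ' a y" for a x y
    using pc' unfolding real_bilinear_def by (metis linear_add)
  have lin1: "circ' (x + y) a = circ' x a + circ' y a" for a x y
    using pc' unfolding real_bilinear_def by (metis linear_add)
  have rb: "rho (circ a b) = br (rho a) (rho b)" "rho (circ' a b) = br (rho a) (rho b)" for a b
    using pc pc' by blast+
  have inv: "act (rho a) (ip b c) = ip (circ' a b) c + ip b (circ' a c)" for a b c using pc' by blast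
  have sym2: "ip (circ' a b) c + ip (circ' b a) c = act (rho c) (ip a b)" for a b c
  proof -
    have q: "ip (circ' x x) c = (1/2) *\<^sub>R act (rho c) (ip x x)" for x using pc' by blast
    have lin: "linear (act (rho c))" using cv unfolding vector_fields_def by simp
    have "ip (circ' (a+b) (a+b)) c = ip (circ' a a) c + ip (circ' b b) c + (ip (circ' a b) c + ip (circ' b a) c)"
      by (simp add: lin1 lin2 ipadd algebra_simps)
    moreover have "ip (a+b) (a+b) = ip a a + ip b b + (ip a b + ip a b)"
      by (simp add: ipadd ipadd2 ipsym[of b a] algebra_simps)
    ultimately have "(1/2) *\<^sub>R act (rho c) (ip a a + ip b b + (ip a b + ip a b))
        = (1/2) *\<^sub>R act (rho c) (ip a a) + (1/2) *\<^sub>R act (rho c) (ip b b) + (ip (circ' a b) c + ip (circ' b a) c)"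
      using q by metis
    hence "(1/2) *\<^sub>R act (rho c) (ip a b + ip a b) = ip (circ' a b) c + ip (circ' b a) c"
      by (simp add: linear_add[OF lin] scaleR_add_right)
    moreover have "(1/2) *\<^sub>R act (rho c) (ip a b + ip a b) = act (rho c) (ip a b)"
    proof -
      have "act (rho c) (ip a b + ip a b) = act (rho c) (ip a b) + act (rho c) (ip a b)"
        by (rule linear_add[OF lin])
      moreover have "(1/2) *\<^sub>R (y + y) = (y::'f)" for y
      proof -
        have "(1/2) *\<^sub>R (y + y) = ((1/2) + (1/2::real)) *\<^sub>R y"
          by (simp only: scaleR_add_right scaleR_add_left)
        thus ?thesis by simp
      qed
      ultimately show ?thesis by simp
    qed
    ultimately show ?thesis by simp
  qed
  have main: "jflat ip circ e1 e2 e3 e4 - jflat ip circ' e1 e2 e3 e4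
            = d3 br act h (rho e1) (rho e2) (rho e3) (rho e4)" for e1 e2 e3 e4
  proof -
    have eA: "circ e1 (circ e2 e3) = circ' e1 (circ' e2 e3) + circ' e1 (D e2 e3) + D e1 (circ e2 e3)"
      by (metis cD lin2)
    have eC: "circ e2 (circ e1 e3) = circ' e2 (circ' e1 e3) + circ' e2 (D e1 e3) + D e2 (circ e1 e3)"
      by (metis cD lin2)
    have eB: "circ (circ e1 e2) e3 = circ' (circ' e1 e2) e3 + circ' (D e1 e2) e3 + D (circ e1 e2) e3"
      by (metis cD lin1)
    have A: "ip (circ e1 (circ e2 e3)) e4 = ip (circ' e1 (circ' e2 e3)) e4
       + act (rho e1) (h (rho e2) (rho e3) (rho e4)) - h (rho e2) (rho e3) (br (rho e1) (rho e4))
       + h (rho e1) (br (rho e2) (rho e3)) (rho e4)"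
      using inv[of e1 "D e2 e3" e4] F1[of e2 e3 e4] F1[of e2 e3 "circ' e1 e4", unfolded rb]
        F1[of e1 "circ e2 e3" e4, unfolded rb] ipsym[of "D e2 e3"]
      unfolding eA ipadd by (simp add: algebra_simps)
    have C: "ip (circ e2 (circ e1 e3)) e4 = ip (circ' e2 (circ' e1 e3)) e4
       + act (rho e2) (h (rho e1) (rho e3) (rho e4)) - h (rho e1) (rho e3) (br (rho e2) (rho e4))
       + h (rho e2) (br (rho e1) (rho e3)) (rho e4)"
      using inv[of e2 "D e1 e3" e4] F1[of e1 e3 e4] F1[of e1 e3 "circ' e2 e4", unfolded rb]
        F1[of e2 "circ e1 e3" e4, unfolded rb] ipsym[of "D e1 e3"]
      unfolding eC ipadd by (simp add: algebra_simps)
    have B: "ip (circ (circ e1 e2) e3) e4 = ip (circ' (circ' e1 e2) e3) e4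
       + act (rho e4) (h (rho e1) (rho e2) (rho e3))
       - act (rho e3) (h (rho e1) (rho e2) (rho e4)) + h (rho e1) (rho e2) (br (rho e3) (rho e4))
       + h (br (rho e1) (rho e2)) (rho e3) (rho e4)"
      using sym2[of "D e1 e2" e3 e4] inv[of e3 "D e1 e2" e4] F1[of e1 e2 e4] F1[of e1 e2 e3]
        F1[of e1 e2 "circ' e3 e4", unfolded rb] F1[of "circ e1 e2" e3 e4, unfolded rb]
        ipsym[of "D e1 e2"]
      unfolding eB ipadd by (simp add: algebra_simps)
    show ?thesis
      unfolding jflat_def jacobiator_def d3_def ipdiff A B C
      using hanti12[of "rho e2" "br (rho e1) (rho e3)" "rho e4"]
        hanti12[of "rho e1" "br (rho e2) (rho e3)" "rho e4"]
        hcyc[of "rho e1" "rho e3" "br (rho e2) (rho e4)"] hcyc[of "rho e2" "rho e3" "br (rho e1) (rho e4)"]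
        hcyc[of "rho e1" "rho e2" "br (rho e3) (rho e4)"]
      by (simp add: algebra_simps)
  qed
  show ?thesis using main assms(4) unfolding equiv4_def by blast
qed

end
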